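(* Let $(\mathcal{E},\mathcal{M})$ be a stable orthogonal factorization system on a category $\mathcal{D}$ with pullbacks, and let $\mathcal{A}$ be a category with a terminal object $1$. Let $(\mathcal{E}',\mathcal{M}')$ be the factorization system on $[\mathcal{A},\mathcal{D}]$ where $\mathcal{E}'$ consists of the natural transformations $e$ with $e_1\in\mathcal{E}$ and $\mathcal{M}'$ consists of the cartesian natural transformations $m$ with $m_1\in\mathcal{M}$. Then $(\mathcal{E}',\mathcal{M}')$ and the componentwise lifting of $(\mathcal{E},\mathcal{M})$ to $[\mathcal{A},\mathcal{D}]$ both restrict to the same factorization system on $\mathrm{CartNt}[\mathcal{A},\mathcal{D}]$, the category of all functors $\mathcal{A}\to\mathcal{D}$ and cartesian natural transformations.
   Context: An orthogonal factorization system $(\mathcal{E},\mathcal{M})$: both classes contain all isomorphisms and are closed under composition; each commuting square $g\circ e = m\circ f$ with $e\in\mathcal{E}$, $m\in\mathcal{M}$ has a unique diagonal; every morphism factors as $m\circ e$ with $e\in\mathcal{E}$, $m\in\mathcal{M}$. It is stable if $\mathcal{E}$ is closed under pullback along arbitrary morphisms. A natural transformation is cartesian if all its naturality squares are pullbacks. The componentwise lifting consists of the natural transformations all of whose components lie in $\mathcal{E}$, respectively in $\mathcal{M}$. Restricting a factorization system to $\mathrm{CartNt}[\mathcal{A},\mathcal{D}]$ means intersecting both classes with the cartesian natural transformations. *)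

theory Defs
  imports Main
begin

record ('o,'a) cat =
  Obj :: "'o set"
  Arr :: "'a set"
  Dom :: "'a \<Rightarrow> 'o"
  Cod :: "'a \<Rightarrow> 'o"
  Id  :: "'o \<Rightarrow> 'a"
  Comp :: "'a \<Rightarrow> 'a \<Rightarrow> 'a"   (* Comp C g f = g \<circ> f *)

definition hom :: "('o,'a,'z) cat_scheme \<Rightarrow> 'o \<Rightarrow> 'o \<Rightarrow> 'a set" where
  "hom C x y = {f \<in> Arr C. Dom C f = x \<and> Cod C f = y}"

definition category :: "('o,'a,'z) cat_scheme \<Rightarrow> bool" where
  "category C \<longleftrightarrow>
     (\<forall>f\<in>Arr C. Dom C f \<in> Obj C \<and> Cod C f \<in> Obj C) \<and>
     (\<forall>x\<in>Obj C. Id C x \<in> hom C x x) \<and>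
     (\<forall>f\<in>Arr C. \<forall>g\<in>Arr C. Cod C f = Dom C g \<longrightarrow>
         Comp C g f \<in> hom C (Dom C f) (Cod C g)) \<and>
     (\<forall>f\<in>Arr C. Comp C f (Id C (Dom C f)) = f \<and> Comp C (Id C (Cod C f)) f = f) \<and>
     (\<forall>f\<in>Arr C. \<forall>g\<in>Arr C. \<forall>h\<in>Arr C. Cod C f = Dom C g \<and> Cod C g = Dom C h \<longrightarrow>
         Comp C h (Comp C g f) = Comp C (Comp C h g) f)"

definition iso :: "('o,'a,'z) cat_scheme \<Rightarrow> 'a \<Rightarrow> bool" where
  "iso C f \<longleftrightarrow> f \<in> Arr C \<and>
     (\<exists>g\<in>hom C (Cod C f) (Dom C f). Comp C g f = Id C (Dom C f) \<and> Comp C f g = Id C (Cod C f))"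

definition terminal :: "('o,'a,'z) cat_scheme \<Rightarrow> 'o \<Rightarrow> bool" where
  "terminal C t \<longleftrightarrow> t \<in> Obj C \<and> (\<forall>x\<in>Obj C. \<exists>!f. f \<in> hom C x t)"

definition is_pullback :: "('o,'a,'z) cat_scheme \<Rightarrow> 'a \<Rightarrow> 'a \<Rightarrow> 'a \<Rightarrow> 'a \<Rightarrow> bool" where
  "is_pullback C f g p1 p2 \<longleftrightarrow>
     f \<in> Arr C \<and> g \<in> Arr C \<and> p1 \<in> Arr C \<and> p2 \<in> Arr C \<and>
     Cod C f = Cod C g \<and> Dom C p1 = Dom C p2 \<and> Cod C p1 = Dom C f \<and> Cod C p2 = Dom C g \<and>
     Comp C f p1 = Comp C g p2 \<and>
     (\<forall>q1\<in>Arr C. \<forall>q2\<in>Arr C.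
        Dom C q1 = Dom C q2 \<and> Cod C q1 = Dom C f \<and> Cod C q2 = Dom C g \<and>
        Comp C f q1 = Comp C g q2 \<longrightarrow>
        (\<exists>!h. h \<in> hom C (Dom C q1) (Dom C p1) \<and> Comp C p1 h = q1 \<and> Comp C p2 h = q2))"

definition has_pullbacks :: "('o,'a,'z) cat_scheme \<Rightarrow> bool" where
  "has_pullbacks C \<longleftrightarrow> (\<forall>f\<in>Arr C. \<forall>g\<in>Arr C. Cod C f = Cod C g \<longrightarrow>
     (\<exists>p1 p2. is_pullback C f g p1 p2))"

definition ofs :: "('o,'a,'z) cat_scheme \<Rightarrow> 'a set \<Rightarrow> 'a set \<Rightarrow> bool" where
  "ofs C E M \<longleftrightarrow>
     E \<subseteq> Arr C \<and> M \<subseteq> Arr C \<and>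
     (\<forall>f. iso C f \<longrightarrow> f \<in> E \<and> f \<in> M) \<and>
     (\<forall>f\<in>E. \<forall>g\<in>E. Cod C f = Dom C g \<longrightarrow> Comp C g f \<in> E) \<and>
     (\<forall>f\<in>M. \<forall>g\<in>M. Cod C f = Dom C g \<longrightarrow> Comp C g f \<in> M) \<and>
     (\<forall>e\<in>E. \<forall>m\<in>M. \<forall>f\<in>hom C (Dom C e) (Dom C m). \<forall>g\<in>hom C (Cod C e) (Cod C m).
        Comp C g e = Comp C m f \<longrightarrow>
        (\<exists>!d. d \<in> hom C (Cod C e) (Dom C m) \<and> Comp C d e = f \<and> Comp C m d = g)) \<and>
     (\<forall>h\<in>Arr C. \<exists>e\<in>E. \<exists>m\<in>M. Cod C e = Dom C m \<and> Comp C m e = h)"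

definition stable_ofs :: "('o,'a,'z) cat_scheme \<Rightarrow> 'a set \<Rightarrow> 'a set \<Rightarrow> bool" where
  "stable_ofs C E M \<longleftrightarrow> ofs C E M \<and>
     (\<forall>f g p1 p2. is_pullback C f g p1 p2 \<and> f \<in> E \<longrightarrow> p2 \<in> E)"

record ('p,'b,'o,'a) fnctr =
  Fob :: "'p \<Rightarrow> 'o"
  Far :: "'b \<Rightarrow> 'a"

definition is_functor :: "('p,'b,'y) cat_scheme \<Rightarrow> ('o,'a,'z) cat_scheme \<Rightarrow> ('p,'b,'o,'a) fnctr \<Rightarrow> bool" where
  "is_functor A D F \<longleftrightarrow>
     (\<forall>x\<in>Obj A. Fob F x \<in> Obj D) \<and>
     (\<forall>u\<in>Arr A. Far F u \<in> hom D (Fob F (Dom A u)) (Fob F (Cod A u))) \<and>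
     (\<forall>x\<in>Obj A. Far F (Id A x) = Id D (Fob F x)) \<and>
     (\<forall>u\<in>Arr A. \<forall>v\<in>Arr A. Cod A u = Dom A v \<longrightarrow> Far F (Comp A v u) = Comp D (Far F v) (Far F u)) \<and>
     (\<forall>x. x \<notin> Obj A \<longrightarrow> Fob F x = undefined) \<and>
     (\<forall>u. u \<notin> Arr A \<longrightarrow> Far F u = undefined)"

record ('p,'b,'o,'a) ntrans =
  NTdom :: "('p,'b,'o,'a) fnctr"
  NTcod :: "('p,'b,'o,'a) fnctr"
  NTmap :: "'p \<Rightarrow> 'a"

definition is_ntrans :: "('p,'b,'y) cat_scheme \<Rightarrow> ('o,'a,'z) cat_scheme \<Rightarrow> ('p,'b,'o,'a) ntrans \<Rightarrow> bool" where
  "is_ntrans A D \<alpha> \<longleftrightarrow>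
     is_functor A D (NTdom \<alpha>) \<and> is_functor A D (NTcod \<alpha>) \<and>
     (\<forall>x\<in>Obj A. NTmap \<alpha> x \<in> hom D (Fob (NTdom \<alpha>) x) (Fob (NTcod \<alpha>) x)) \<and>
     (\<forall>u\<in>Arr A. Comp D (Far (NTcod \<alpha>) u) (NTmap \<alpha> (Dom A u))
                = Comp D (NTmap \<alpha> (Cod A u)) (Far (NTdom \<alpha>) u)) \<and>
     (\<forall>x. x \<notin> Obj A \<longrightarrow> NTmap \<alpha> x = undefined)"

definition functor_cat :: "('p,'b,'y) cat_scheme \<Rightarrow> ('o,'a,'z) cat_scheme \<Rightarrow>
    (('p,'b,'o,'a) fnctr, ('p,'b,'o,'a) ntrans) cat" where
  "functor_cat A D = \<lparr>
     Obj = {F. is_functor A D F},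
     Arr = {\<alpha>. is_ntrans A D \<alpha>},
     Dom = NTdom,
     Cod = NTcod,
     Id = (\<lambda>F. \<lparr>NTdom = F, NTcod = F,
                NTmap = (\<lambda>x. if x \<in> Obj A then Id D (Fob F x) else undefined)\<rparr>),
     Comp = (\<lambda>\<beta> \<alpha>. \<lparr>NTdom = NTdom \<alpha>, NTcod = NTcod \<beta>,
                NTmap = (\<lambda>x. if x \<in> Obj A then Comp D (NTmap \<beta> x) (NTmap \<alpha> x) else undefined)\<rparr>) \<rparr>"

definition cartesian :: "('p,'b,'y) cat_scheme \<Rightarrow> ('o,'a,'z) cat_scheme \<Rightarrow> ('p,'b,'o,'a) ntrans \<Rightarrow> bool" where
  "cartesian A D \<alpha> \<longleftrightarrow> is_ntrans A D \<alpha> \<and>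
     (\<forall>u\<in>Arr A. is_pullback D (Far (NTcod \<alpha>) u) (NTmap \<alpha> (Cod A u))
                                (NTmap \<alpha> (Dom A u)) (Far (NTdom \<alpha>) u))"

definition CartNt :: "('p,'b,'y) cat_scheme \<Rightarrow> ('o,'a,'z) cat_scheme \<Rightarrow>
    (('p,'b,'o,'a) fnctr, ('p,'b,'o,'a) ntrans) cat" where
  "CartNt A D = (functor_cat A D)\<lparr>Arr := {\<alpha>. cartesian A D \<alpha>}\<rparr>"

definition componentwise :: "('p,'b,'y) cat_scheme \<Rightarrow> ('o,'a,'z) cat_scheme \<Rightarrow> 'a set \<Rightarrow>
    ('p,'b,'o,'a) ntrans set" where
  "componentwise A D K = {\<alpha>. is_ntrans A D \<alpha> \<and> (\<forall>x\<in>Obj A. NTmap \<alpha> x \<in> K)}"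

end

theory Submission
  imports Defs
begin


locale dcat =
  fixes D :: "('o,'a,'z) cat_scheme"
  assumes cat: "category D"
begin

abbreviation cmp (infixr "\<cdot>" 55) where "g \<cdot> f \<equiv> Comp D g f"

lemma dom_obj[simp]: "f \<in> Arr D \<Longrightarrow> Dom D f \<in> Obj D"
  using cat unfolding category_def by blast
lemma cod_obj[simp]: "f \<in> Arr D \<Longrightarrow> Cod D f \<in> Obj D"
  using cat unfolding category_def by blast
lemma comp_arr[simp]: "f \<in> Arr D \<Longrightarrow> g \<in> Arr D \<Longrightarrow> Cod D f = Dom D g \<Longrightarrow> g \<cdot> f \<in> Arr D"
  using cat unfolding category_def hom_def by blast
lemma dom_comp[simp]: "f \<in> Arr D \<Longrightarrow> g \<in> Arr D \<Longrightarrow> Cod D f = Dom D g \<Longrightarrow> Dom D (g \<cdot> f) = Dom D f"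
  using cat unfolding category_def hom_def by blast
lemma cod_comp[simp]: "f \<in> Arr D \<Longrightarrow> g \<in> Arr D \<Longrightarrow> Cod D f = Dom D g \<Longrightarrow> Cod D (g \<cdot> f) = Cod D g"
  using cat unfolding category_def hom_def by blast
lemma id_arr[simp]: "x \<in> Obj D \<Longrightarrow> Id D x \<in> Arr D"
  using cat unfolding category_def hom_def by blast
lemma dom_id[simp]: "x \<in> Obj D \<Longrightarrow> Dom D (Id D x) = x"
  using cat unfolding category_def hom_def by blast
lemma cod_id[simp]: "x \<in> Obj D \<Longrightarrow> Cod D (Id D x) = x"
  using cat unfolding category_def hom_def by blast
lemma comp_id_r[simp]: "f \<in> Arr D \<Longrightarrow> Dom D f = x \<Longrightarrow> f \<cdot> Id D x = f"
  using cat unfolding category_def by blast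
lemma comp_id_l[simp]: "f \<in> Arr D \<Longrightarrow> Cod D f = x \<Longrightarrow> Id D x \<cdot> f = f"
  using cat unfolding category_def by blast
lemma assoc: "f \<in> Arr D \<Longrightarrow> g \<in> Arr D \<Longrightarrow> h \<in> Arr D \<Longrightarrow> Cod D f = Dom D g \<Longrightarrow> Cod D g = Dom D h
   \<Longrightarrow> (h \<cdot> g) \<cdot> f = h \<cdot> g \<cdot> f"
  using cat unfolding category_def by metis

lemma pb_sym: "is_pullback D f g p1 p2 \<Longrightarrow> is_pullback D g f p2 p1"
  unfolding is_pullback_def by (smt (verit))

lemma pbD: assumes "is_pullback D f g p1 p2"
  shows "f \<in> Arr D" "g \<in> Arr D" "p1 \<in> Arr D" "p2 \<in> Arr D"
    "Cod D f = Cod D g" "Dom D p1 = Dom D p2" "Cod D p1 = Dom D f" "Cod D p2 = Dom D g"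
    "f \<cdot> p1 = g \<cdot> p2"
  using assms unfolding is_pullback_def by auto

lemma pb_ex: assumes "is_pullback D f g p1 p2" "q1 \<in> Arr D" "q2 \<in> Arr D"
  "Dom D q1 = Dom D q2" "Cod D q1 = Dom D f" "Cod D q2 = Dom D g" "f \<cdot> q1 = g \<cdot> q2"
  shows "\<exists>h. h \<in> Arr D \<and> Dom D h = Dom D q1 \<and> Cod D h = Dom D p1 \<and> p1 \<cdot> h = q1 \<and> p2 \<cdot> h = q2"
  using assms unfolding is_pullback_def hom_def by blast

lemma pb_uniq: assumes "is_pullback D f g p1 p2" "h \<in> Arr D" "h' \<in> Arr D"
  "Dom D h = Dom D h'" "Cod D h = Dom D p1" "Cod D h' = Dom D p1"
  "p1 \<cdot> h = p1 \<cdot> h'" "p2 \<cdot> h = p2 \<cdot> h'"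
  shows "h = h'"
proof -
  note P = pbD[OF assms(1)]
  have U: "\<And>q1 q2. q1 \<in> Arr D \<Longrightarrow> q2 \<in> Arr D \<Longrightarrow> Dom D q1 = Dom D q2 \<Longrightarrow> Cod D q1 = Dom D f
     \<Longrightarrow> Cod D q2 = Dom D g \<Longrightarrow> f \<cdot> q1 = g \<cdot> q2 \<Longrightarrow>
     \<exists>!k. k \<in> hom D (Dom D q1) (Dom D p1) \<and> p1 \<cdot> k = q1 \<and> p2 \<cdot> k = q2"
    using assms(1) unfolding is_pullback_def by blast
  have c: "f \<cdot> (p1 \<cdot> h) = g \<cdot> (p2 \<cdot> h)"
    using P assms by (metis assoc)
  have "\<exists>!k. k \<in> hom D (Dom D (p1 \<cdot> h)) (Dom D p1) \<and> p1 \<cdot> k = p1 \<cdot> h \<and> p2 \<cdot> k = p2 \<cdot> h"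
    by (rule U) (use P assms c in auto)
  then show ?thesis using assms P unfolding hom_def by auto
qed

lemma pb_paste:
  assumes R: "is_pullback D f g p1 p2" and L: "is_pullback D p2 g' q1 q2"
  shows "is_pullback D f (g \<cdot> g') (p1 \<cdot> q1) q2"
proof -
  note P = pbD[OF R] and Q = pbD[OF L]
  have comm: "f \<cdot> (p1 \<cdot> q1) = (g \<cdot> g') \<cdot> q2"
  proof -
    have "f \<cdot> (p1 \<cdot> q1) = (f \<cdot> p1) \<cdot> q1" by (rule assoc[symmetric]) (use P Q in auto)
    also have "\<dots> = (g \<cdot> p2) \<cdot> q1" using P by simp
    also have "\<dots> = g \<cdot> (g' \<cdot> q2)" using P Q by (simp add: assoc)
    also have "\<dots> = (g \<cdot> g') \<cdot> q2" using P Q by (simp add: assoc)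
    finally show ?thesis .
  qed
  have univ: "\<exists>!h. h \<in> hom D (Dom D r1) (Dom D (p1 \<cdot> q1)) \<and> (p1 \<cdot> q1) \<cdot> h = r1 \<and> q2 \<cdot> h = r2"
    if r: "r1 \<in> Arr D" "r2 \<in> Arr D" "Dom D r1 = Dom D r2" "Cod D r1 = Dom D f"
       "Cod D r2 = Dom D (g \<cdot> g')" "f \<cdot> r1 = (g \<cdot> g') \<cdot> r2" for r1 r2
  proof -
    have r2c: "Cod D r2 = Dom D g'" using r P Q by simp
    have gg: "Cod D g' = Dom D g" using P Q by simp
    have "(g \<cdot> g') \<cdot> r2 = g \<cdot> (g' \<cdot> r2)" by (rule assoc) (use r(2) r2c gg P(2) Q(2) in auto)
    then have e1: "f \<cdot> r1 = g \<cdot> (g' \<cdot> r2)" using r(6) by simp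
    have "\<exists>h1. h1 \<in> Arr D \<and> Dom D h1 = Dom D r1 \<and> Cod D h1 = Dom D p1 \<and> p1 \<cdot> h1 = r1 \<and> p2 \<cdot> h1 = g' \<cdot> r2"
      by (rule pb_ex[OF R]) (use r(1-4) r2c gg e1 Q(2) P(2) in simp_all)
    then obtain h1 where h1: "h1 \<in> Arr D" "Dom D h1 = Dom D r1" "Cod D h1 = Dom D p1" "p1 \<cdot> h1 = r1" "p2 \<cdot> h1 = g' \<cdot> r2"
      by blast
    have "\<exists>h. h \<in> Arr D \<and> Dom D h = Dom D h1 \<and> Cod D h = Dom D q1 \<and> q1 \<cdot> h = h1 \<and> q2 \<cdot> h = r2"
      by (rule pb_ex[OF L]) (use h1(1-3,5) r(2,3) r2c Q(1-8) P(6) in simp_all)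
    then obtain h where h: "h \<in> Arr D" "Dom D h = Dom D r1" "Cod D h = Dom D q1" "q1 \<cdot> h = h1" "q2 \<cdot> h = r2"
      using h1(2) by auto
    have T: "f \<in> Arr D" "g \<in> Arr D" "p1 \<in> Arr D" "p2 \<in> Arr D" "g' \<in> Arr D" "q1 \<in> Arr D" "q2 \<in> Arr D"
      "Cod D q1 = Dom D p1" "Cod D p1 = Dom D f" "Cod D q2 = Dom D g'" "Cod D g' = Dom D g" "Dom D p1 = Dom D p2" "Cod D p2 = Dom D g" "Dom D q1 = Dom D q2"
      using P Q by auto
    have ex: "h \<in> hom D (Dom D r1) (Dom D (p1 \<cdot> q1)) \<and> (p1 \<cdot> q1) \<cdot> h = r1 \<and> q2 \<cdot> h = r2"
      using h T h1(4) unfolding hom_def by (simp add: assoc)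
    have un: "k = h" if k: "k \<in> hom D (Dom D r1) (Dom D (p1 \<cdot> q1))" "(p1 \<cdot> q1) \<cdot> k = r1" "q2 \<cdot> k = r2" for k
    proof -
      have ka: "k \<in> Arr D" "Dom D k = Dom D r1" "Cod D k = Dom D q1" using k T unfolding hom_def by auto
      have "q1 \<cdot> k = h1"
      proof (rule pb_uniq[OF R])
        show "p1 \<cdot> q1 \<cdot> k = p1 \<cdot> h1" using k(2) ka T h1(4) by (simp add: assoc)
        have "p2 \<cdot> q1 \<cdot> k = (p2 \<cdot> q1) \<cdot> k" using ka T by (simp add: assoc)
        also have "\<dots> = (g' \<cdot> q2) \<cdot> k" using Q(9) by simp
        also have "\<dots> = g' \<cdot> q2 \<cdot> k" using ka T by (simp add: assoc)
        finally show "p2 \<cdot> q1 \<cdot> k = p2 \<cdot> h1" using k(3) h1(5) by simp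
      qed (use ka h1(1-3) T in auto)
      then show ?thesis using pb_uniq[OF L, of k h] ka h T k(3) by auto
    qed
    show ?thesis using ex un by blast
  qed
  have univ': "\<forall>r1\<in>Arr D. \<forall>r2\<in>Arr D. Dom D r1 = Dom D r2 \<and> Cod D r1 = Dom D f \<and>
       Cod D r2 = Dom D (g \<cdot> g') \<and> f \<cdot> r1 = (g \<cdot> g') \<cdot> r2 \<longrightarrow>
       (\<exists>!h. h \<in> hom D (Dom D r1) (Dom D (p1 \<cdot> q1)) \<and> (p1 \<cdot> q1) \<cdot> h = r1 \<and> q2 \<cdot> h = r2)"
    using univ by blast
  show ?thesis unfolding is_pullback_def
    using P Q comm univ' by (intro conjI) (assumption | simp)+
qed

lemma pb_cancel:
  assumes R: "is_pullback D f g p1 p2" and O: "is_pullback D f (g \<cdot> g') (p1 \<cdot> q1) q2"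
    and c: "p2 \<cdot> q1 = g' \<cdot> q2" and ty: "q1 \<in> Arr D" "g' \<in> Arr D" "q2 \<in> Arr D"
      "Cod D q1 = Dom D p1" "Cod D g' = Dom D g" "Dom D q1 = Dom D q2" "Cod D q2 = Dom D g'"
  shows "is_pullback D p2 g' q1 q2"
proof -
  note P = pbD[OF R] and Q = pbD[OF O]
  have univ: "\<exists>!h. h \<in> hom D (Dom D r1) (Dom D q1) \<and> q1 \<cdot> h = r1 \<and> q2 \<cdot> h = r2"
    if r: "r1 \<in> Arr D" "r2 \<in> Arr D" "Dom D r1 = Dom D r2" "Cod D r1 = Dom D p2"
       "Cod D r2 = Dom D g'" "p2 \<cdot> r1 = g' \<cdot> r2" for r1 r2
  proof -
    have T: "f \<in> Arr D" "g \<in> Arr D" "p1 \<in> Arr D" "p2 \<in> Arr D" "g' \<in> Arr D" "q1 \<in> Arr D" "q2 \<in> Arr D"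
      "Cod D q1 = Dom D p2" "Cod D p1 = Dom D f" "Cod D q2 = Dom D g'" "Cod D g' = Dom D g" "Dom D p1 = Dom D p2"
      "Cod D p2 = Dom D g" "Dom D q1 = Dom D q2"
      using P ty by auto
    have e1: "f \<cdot> (p1 \<cdot> r1) = (g \<cdot> g') \<cdot> r2"
    proof -
      have "f \<cdot> (p1 \<cdot> r1) = (f \<cdot> p1) \<cdot> r1" using T r(1,4) by (simp add: assoc)
      also have "\<dots> = (g \<cdot> p2) \<cdot> r1" using P(9) by simp
      also have "\<dots> = g \<cdot> (p2 \<cdot> r1)" using T r(1,4) by (simp add: assoc)
      also have "\<dots> = g \<cdot> (g' \<cdot> r2)" using r(6) by simp
      also have "\<dots> = (g \<cdot> g') \<cdot> r2" using T r(2,5) by (simp add: assoc)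
      finally show ?thesis .
    qed
    have "\<exists>h. h \<in> Arr D \<and> Dom D h = Dom D (p1 \<cdot> r1) \<and> Cod D h = Dom D (p1 \<cdot> q1) \<and> (p1 \<cdot> q1) \<cdot> h = p1 \<cdot> r1 \<and> q2 \<cdot> h = r2"
      by (rule pb_ex[OF O]) (use r(1-5) T e1 in simp_all)
    then obtain h where h: "h \<in> Arr D" "Dom D h = Dom D r1" "Cod D h = Dom D q1" "(p1 \<cdot> q1) \<cdot> h = p1 \<cdot> r1" "q2 \<cdot> h = r2"
      using r(1,4) T by auto
    have hq: "q1 \<cdot> h = r1"
    proof (rule pb_uniq[OF R])
      show "p1 \<cdot> q1 \<cdot> h = p1 \<cdot> r1" using h(1-4) T by (simp add: assoc)
      have "p2 \<cdot> q1 \<cdot> h = (p2 \<cdot> q1) \<cdot> h" using h(1-3) T by (simp add: assoc)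
      also have "\<dots> = (g' \<cdot> q2) \<cdot> h" using c by simp
      also have "\<dots> = g' \<cdot> q2 \<cdot> h" using h(1-3) T by (simp add: assoc)
      finally show "p2 \<cdot> q1 \<cdot> h = p2 \<cdot> r1" using h(5) r(6) by simp
    qed (use h(1-3) r(1,3,4) T in auto)
    have un: "k = h" if k: "k \<in> hom D (Dom D r1) (Dom D q1)" "q1 \<cdot> k = r1" "q2 \<cdot> k = r2" for k
    proof -
      have ka: "k \<in> Arr D" "Dom D k = Dom D r1" "Cod D k = Dom D q1" using k unfolding hom_def by auto
      show ?thesis
      proof (rule pb_uniq[OF O])
        show "(p1 \<cdot> q1) \<cdot> k = (p1 \<cdot> q1) \<cdot> h" using k(2) ka h(1-4) hq T by (simp add: assoc)
      qed (use ka h(1-3,5) k(3) T in auto)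
    qed
    show ?thesis using h hq un unfolding hom_def by blast
  qed
  have univ': "\<forall>r1\<in>Arr D. \<forall>r2\<in>Arr D. Dom D r1 = Dom D r2 \<and> Cod D r1 = Dom D p2 \<and>
       Cod D r2 = Dom D g' \<and> p2 \<cdot> r1 = g' \<cdot> r2 \<longrightarrow>
       (\<exists>!h. h \<in> hom D (Dom D r1) (Dom D q1) \<and> q1 \<cdot> h = r1 \<and> q2 \<cdot> h = r2)"
    using univ by blast
  have b: "Cod D p2 = Cod D g'" "Cod D q1 = Dom D p2" using P ty by auto
  show ?thesis unfolding is_pullback_def
    using P(4) ty b c univ' by (intro conjI) assumption+
qed

end


locale dofs = dcat D for D :: "('o,'a,'z) cat_scheme" +
  fixes E M :: "'a set"
  assumes ofs: "ofs D E M"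
begin

lemma E_arr: "e \<in> E \<Longrightarrow> e \<in> Arr D" using ofs unfolding ofs_def by blast
lemma M_arr: "m \<in> M \<Longrightarrow> m \<in> Arr D" using ofs unfolding ofs_def by blast
lemma iso_EM: "iso D f \<Longrightarrow> f \<in> E \<and> f \<in> M" using ofs unfolding ofs_def by blast
lemma E_comp: "f \<in> E \<Longrightarrow> g \<in> E \<Longrightarrow> Cod D f = Dom D g \<Longrightarrow> g \<cdot> f \<in> E"
  using ofs unfolding ofs_def by blast
lemma M_comp: "f \<in> M \<Longrightarrow> g \<in> M \<Longrightarrow> Cod D f = Dom D g \<Longrightarrow> g \<cdot> f \<in> M"
  using ofs unfolding ofs_def by blast
lemma factor: "h \<in> Arr D \<Longrightarrow> \<exists>e\<in>E. \<exists>m\<in>M. Cod D e = Dom D m \<and> m \<cdot> e = h"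
  using ofs unfolding ofs_def by blast

lemma lift: assumes "e \<in> E" "m \<in> M" "f \<in> Arr D" "Dom D f = Dom D e" "Cod D f = Dom D m"
  "g \<in> Arr D" "Dom D g = Cod D e" "Cod D g = Cod D m" "g \<cdot> e = m \<cdot> f"
  shows "\<exists>!d. d \<in> hom D (Cod D e) (Dom D m) \<and> d \<cdot> e = f \<and> m \<cdot> d = g"
proof -
  have "f \<in> hom D (Dom D e) (Dom D m)" "g \<in> hom D (Cod D e) (Cod D m)"
    using assms unfolding hom_def by auto
  then show ?thesis using ofs assms(1,2,9) unfolding ofs_def by blast
qed

lemma lift_uniq: assumes "e \<in> E" "m \<in> M" "d1 \<in> Arr D" "d2 \<in> Arr D"
  "Dom D d1 = Cod D e" "Dom D d2 = Cod D e" "Cod D d1 = Dom D m" "Cod D d2 = Dom D m"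
  "d1 \<cdot> e = d2 \<cdot> e" "m \<cdot> d1 = m \<cdot> d2"
  shows "d1 = d2"
proof -
  have ea: "e \<in> Arr D" "m \<in> Arr D" using assms E_arr M_arr by auto
  have "\<exists>!d. d \<in> hom D (Cod D e) (Dom D m) \<and> d \<cdot> e = d1 \<cdot> e \<and> m \<cdot> d = m \<cdot> d1"
  proof (rule lift)
    show "(m \<cdot> d1) \<cdot> e = m \<cdot> d1 \<cdot> e" using ea assms(3,5,7) by (simp add: assoc)
  qed (use ea assms(1-3,5,7) in auto)
  then show ?thesis using assms unfolding hom_def by auto
qed

lemma iso_intro: assumes "e \<in> Arr D" "h \<in> Arr D" "Dom D h = Cod D e" "Cod D h = Dom D e"
  "h \<cdot> e = Id D (Dom D e)" "e \<cdot> h = Id D (Cod D e)"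
  shows "iso D e"
  using assms unfolding iso_def hom_def by auto

lemma M_pb: assumes pb: "is_pullback D f g p1 p2" and gM: "g \<in> M"
  shows "p1 \<in> M"
proof -
  note P = pbD[OF pb]
  obtain e m where em: "e \<in> E" "m \<in> M" "Cod D e = Dom D m" "m \<cdot> e = p1"
    using factor[OF P(3)] by blast
  have ea: "e \<in> Arr D" "m \<in> Arr D" using em E_arr M_arr by auto
  have et: "Dom D e = Dom D p1" "Cod D m = Cod D p1" using em ea by auto
  have sq: "(f \<cdot> m) \<cdot> e = g \<cdot> p2"
  proof -
    have "(f \<cdot> m) \<cdot> e = f \<cdot> (m \<cdot> e)" using ea em(3) et P(1,7) by (simp add: assoc)
    then show ?thesis using em(4) P(9) by simp
  qed
  have "\<exists>!d. d \<in> hom D (Cod D e) (Dom D g) \<and> d \<cdot> e = p2 \<and> g \<cdot> d = f \<cdot> m"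
    by (rule lift) (use em(1) gM ea et P(1-8) sq em(3) in auto)
  then obtain d where d: "d \<in> Arr D" "Dom D d = Cod D e" "Cod D d = Dom D g" "d \<cdot> e = p2" "g \<cdot> d = f \<cdot> m"
    unfolding hom_def by auto
  have "\<exists>h. h \<in> Arr D \<and> Dom D h = Dom D m \<and> Cod D h = Dom D p1 \<and> p1 \<cdot> h = m \<and> p2 \<cdot> h = d"
    by (rule pb_ex[OF pb]) (use ea d em(3) et P in auto)
  then obtain h where h: "h \<in> Arr D" "Dom D h = Cod D e" "Cod D h = Dom D e" "p1 \<cdot> h = m" "p2 \<cdot> h = d"
    using em(3) et by auto
  have he: "h \<cdot> e = Id D (Dom D e)"
  proof (rule pb_uniq[OF pb])
    show "p1 \<cdot> h \<cdot> e = p1 \<cdot> Id D (Dom D e)"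
    proof -
      have "p1 \<cdot> h \<cdot> e = (p1 \<cdot> h) \<cdot> e" using h(1-3) ea P(3) et by (simp add: assoc)
      then show ?thesis using h(4) em(4) ea et P(3) by simp
    qed
    show "p2 \<cdot> h \<cdot> e = p2 \<cdot> Id D (Dom D e)"
    proof -
      have "p2 \<cdot> h \<cdot> e = (p2 \<cdot> h) \<cdot> e" using h(1-3) ea P(4,6) et by (simp add: assoc)
      then show ?thesis using h(5) d(4) ea et P(4,6) by simp
    qed
  qed (use h(1-3) ea et P(3) in auto)
  have eh: "e \<cdot> h = Id D (Cod D e)"
  proof (rule lift_uniq[OF em(1,2)])
    show "(e \<cdot> h) \<cdot> e = Id D (Cod D e) \<cdot> e"
    proof -
      have "(e \<cdot> h) \<cdot> e = e \<cdot> (h \<cdot> e)" using h ea by (simp add: assoc)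
      then show ?thesis using he ea by simp
    qed
    show "m \<cdot> e \<cdot> h = m \<cdot> Id D (Cod D e)"
    proof -
      have "m \<cdot> e \<cdot> h = (m \<cdot> e) \<cdot> h" using h ea em(3) by (simp add: assoc)
      then show ?thesis using h(4) em(3,4) ea by simp
    qed
  qed (use h ea em(3) in auto)
  have "iso D e" by (rule iso_intro[OF ea(1) h(1-3) he eh])
  then have "e \<in> M" using iso_EM by blast
  then show ?thesis using M_comp[OF _ em(2,3)] em(4) by simp
qed

end

locale dsofs = dofs +
  assumes stable: "\<And>f g p1 p2. is_pullback D f g p1 p2 \<Longrightarrow> f \<in> E \<Longrightarrow> p2 \<in> E"
begin
lemma E_pb: "is_pullback D f g p1 p2 \<Longrightarrow> g \<in> E \<Longrightarrow> p1 \<in> E"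
  using stable pb_sym by blast
end



lemma CartNt_simps:
  "Obj (CartNt A D) = {F. is_functor A D F}"
  "Arr (CartNt A D) = {\<alpha>. cartesian A D \<alpha>}"
  "Dom (CartNt A D) = NTdom"
  "Cod (CartNt A D) = NTcod"
  "Comp (CartNt A D) \<beta> \<alpha> = \<lparr>NTdom = NTdom \<alpha>, NTcod = NTcod \<beta>,
                NTmap = (\<lambda>x. if x \<in> Obj A then Comp D (NTmap \<beta> x) (NTmap \<alpha> x) else undefined)\<rparr>"
  "Id (CartNt A D) F = \<lparr>NTdom = F, NTcod = F,
                NTmap = (\<lambda>x. if x \<in> Obj A then Id D (Fob F x) else undefined)\<rparr>"
  by (simp_all add: CartNt_def functor_cat_def)

lemma ntrans_eqI:
  fixes \<alpha> \<beta> :: "('p,'b,'o,'a) ntrans"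
  assumes "NTdom \<alpha> = NTdom \<beta>" "NTcod \<alpha> = NTcod \<beta>" "\<And>x. NTmap \<alpha> x = NTmap \<beta> x"
  shows "\<alpha> = \<beta>"
  using assms by (cases \<alpha>, cases \<beta>) auto

locale setting = dsofs D E M for D :: "('o,'a,'z) cat_scheme" and E M +
  fixes A :: "('p,'b,'y) cat_scheme" and t :: 'p
  assumes catA: "category A" and termA: "terminal A t" and pbs: "has_pullbacks D"
begin

lemma dA: "dcat A" using catA by (simp add: dcat_def)
lemmas A_comp_arr = dcat.comp_arr[OF dA] and A_dom_comp = dcat.dom_comp[OF dA]
  and A_cod_comp = dcat.cod_comp[OF dA] and A_id_arr = dcat.id_arr[OF dA]
  and A_dom_id = dcat.dom_id[OF dA] and A_cod_id = dcat.cod_id[OF dA]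
  and A_dom_obj = dcat.dom_obj[OF dA] and A_cod_obj = dcat.cod_obj[OF dA]
  and A_comp_id_r = dcat.comp_id_r[OF dA] and A_comp_id_l = dcat.comp_id_l[OF dA]

lemma t_obj: "t \<in> Obj A" using termA unfolding terminal_def by blast

definition tm :: "'p \<Rightarrow> 'b" where "tm x = (THE u. u \<in> hom A x t)"

lemma tm: assumes "x \<in> Obj A" shows "tm x \<in> Arr A" "Dom A (tm x) = x" "Cod A (tm x) = t"
proof -
  have "\<exists>!u. u \<in> hom A x t" using termA assms unfolding terminal_def by blast
  then have "tm x \<in> hom A x t" unfolding tm_def by (rule theI')
  then show "tm x \<in> Arr A" "Dom A (tm x) = x" "Cod A (tm x) = t" unfolding hom_def by auto
qed

lemma tm_uniq: assumes "u \<in> Arr A" "Cod A u = t" shows "u = tm (Dom A u)"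
proof -
  have x: "Dom A u \<in> Obj A" using assms A_dom_obj by blast
  have "\<exists>!u'. u' \<in> hom A (Dom A u) t" using termA x unfolding terminal_def by blast
  moreover have "u \<in> hom A (Dom A u) t" "tm (Dom A u) \<in> hom A (Dom A u) t"
    using assms tm[OF x] unfolding hom_def by auto
  ultimately show ?thesis by blast
qed

lemma tm_comp: assumes "v \<in> Arr A" shows "Comp A (tm (Cod A v)) v = tm (Dom A v)"
proof -
  have y: "Cod A v \<in> Obj A" "Dom A v \<in> Obj A" using assms A_dom_obj A_cod_obj by auto
  note T = tm[OF y(1)]
  have "Comp A (tm (Cod A v)) v = tm (Dom A (Comp A (tm (Cod A v)) v))"
    by (rule tm_uniq) (use assms T A_comp_arr A_cod_comp in auto)
  then show ?thesis using assms T A_dom_comp by auto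
qed

lemma tm_t: "tm t = Id A t"
  using tm_uniq[of "Id A t"] t_obj A_id_arr A_dom_id A_cod_id by auto

lemma F_obj: "is_functor A D F \<Longrightarrow> x \<in> Obj A \<Longrightarrow> Fob F x \<in> Obj D"
  unfolding is_functor_def by blast
lemma F_arr: assumes "is_functor A D F" "u \<in> Arr A"
  shows "Far F u \<in> Arr D" "Dom D (Far F u) = Fob F (Dom A u)" "Cod D (Far F u) = Fob F (Cod A u)"
  using assms unfolding is_functor_def hom_def by auto
lemma F_id: "is_functor A D F \<Longrightarrow> x \<in> Obj A \<Longrightarrow> Far F (Id A x) = Id D (Fob F x)"
  unfolding is_functor_def by blast
lemma F_comp: "is_functor A D F \<Longrightarrow> u \<in> Arr A \<Longrightarrow> v \<in> Arr A \<Longrightarrow> Cod A u = Dom A v \<Longrightarrow>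
   Far F (Comp A v u) = Far F v \<cdot> Far F u"
  unfolding is_functor_def by blast

lemma NT_fun: "is_ntrans A D \<alpha> \<Longrightarrow> is_functor A D (NTdom \<alpha>)" "is_ntrans A D \<alpha> \<Longrightarrow> is_functor A D (NTcod \<alpha>)"
  unfolding is_ntrans_def by auto
lemma NT_arr: assumes "is_ntrans A D \<alpha>" "x \<in> Obj A"
  shows "NTmap \<alpha> x \<in> Arr D" "Dom D (NTmap \<alpha> x) = Fob (NTdom \<alpha>) x" "Cod D (NTmap \<alpha> x) = Fob (NTcod \<alpha>) x"
  using assms unfolding is_ntrans_def hom_def by auto
lemma NT_nat: "is_ntrans A D \<alpha> \<Longrightarrow> u \<in> Arr A \<Longrightarrow>
   Far (NTcod \<alpha>) u \<cdot> NTmap \<alpha> (Dom A u) = NTmap \<alpha> (Cod A u) \<cdot> Far (NTdom \<alpha>) u"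
  unfolding is_ntrans_def by blast
lemma NT_undef: "is_ntrans A D \<alpha> \<Longrightarrow> x \<notin> Obj A \<Longrightarrow> NTmap \<alpha> x = undefined"
  unfolding is_ntrans_def by blast
lemma cart_nt: "cartesian A D \<alpha> \<Longrightarrow> is_ntrans A D \<alpha>" unfolding cartesian_def by blast
lemma cart_pb: "cartesian A D \<alpha> \<Longrightarrow> u \<in> Arr A \<Longrightarrow>
  is_pullback D (Far (NTcod \<alpha>) u) (NTmap \<alpha> (Cod A u)) (NTmap \<alpha> (Dom A u)) (Far (NTdom \<alpha>) u)"
  unfolding cartesian_def by blast

lemma cartI: assumes "is_functor A D F" "is_functor A D G"
  "\<And>x. x \<in> Obj A \<Longrightarrow> NTmap \<alpha> x \<in> Arr D \<and> Dom D (NTmap \<alpha> x) = Fob F x \<and> Cod D (NTmap \<alpha> x) = Fob G x"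
  "\<And>x. x \<notin> Obj A \<Longrightarrow> NTmap \<alpha> x = undefined"
  "\<And>u. u \<in> Arr A \<Longrightarrow> is_pullback D (Far G u) (NTmap \<alpha> (Cod A u)) (NTmap \<alpha> (Dom A u)) (Far F u)"
  "NTdom \<alpha> = F" "NTcod \<alpha> = G"
  shows "cartesian A D \<alpha>"
  unfolding cartesian_def is_ntrans_def hom_def using assms pbD by auto

lemma cart_E: assumes "cartesian A D \<alpha>" "NTmap \<alpha> t \<in> E" "x \<in> Obj A" shows "NTmap \<alpha> x \<in> E"
proof -
  note T = tm[OF assms(3)]
  have "is_pullback D (Far (NTcod \<alpha>) (tm x)) (NTmap \<alpha> t) (NTmap \<alpha> x) (Far (NTdom \<alpha>) (tm x))"
    using cart_pb[OF assms(1) T(1)] T by simp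
  then show ?thesis using E_pb assms(2) by blast
qed

lemma cart_M: assumes "cartesian A D \<alpha>" "NTmap \<alpha> t \<in> M" "x \<in> Obj A" shows "NTmap \<alpha> x \<in> M"
proof -
  note T = tm[OF assms(3)]
  have "is_pullback D (Far (NTcod \<alpha>) (tm x)) (NTmap \<alpha> t) (NTmap \<alpha> x) (Far (NTdom \<alpha>) (tm x))"
    using cart_pb[OF assms(1) T(1)] T by simp
  then show ?thesis using M_pb assms(2) by blast
qed

lemma cart_comp: assumes a: "cartesian A D \<alpha>" and b: "cartesian A D \<beta>" and c: "NTcod \<alpha> = NTdom \<beta>"
  shows "cartesian A D (Comp (CartNt A D) \<beta> \<alpha>)"
proof -
  have na: "is_ntrans A D \<alpha>" and nb: "is_ntrans A D \<beta>" using a b cart_nt by auto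
  show ?thesis
  proof (rule cartI[where F = "NTdom \<alpha>" and G = "NTcod \<beta>"])
    show "is_functor A D (NTdom \<alpha>)" "is_functor A D (NTcod \<beta>)" using na nb NT_fun by auto
    show "NTmap (Comp (CartNt A D) \<beta> \<alpha>) x \<in> Arr D \<and>
          Dom D (NTmap (Comp (CartNt A D) \<beta> \<alpha>) x) = Fob (NTdom \<alpha>) x \<and>
          Cod D (NTmap (Comp (CartNt A D) \<beta> \<alpha>) x) = Fob (NTcod \<beta>) x" if "x \<in> Obj A" for x
      using NT_arr[OF na that] NT_arr[OF nb that] c that by (simp add: CartNt_simps)
    show "NTmap (Comp (CartNt A D) \<beta> \<alpha>) x = undefined" if "x \<notin> Obj A" for x
      using that by (simp add: CartNt_simps)
    show "is_pullback D (Far (NTcod \<beta>) u) (NTmap (Comp (CartNt A D) \<beta> \<alpha>) (Cod A u))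
           (NTmap (Comp (CartNt A D) \<beta> \<alpha>) (Dom A u)) (Far (NTdom \<alpha>) u)" if u: "u \<in> Arr A" for u
    proof -
      have "is_pullback D (Far (NTcod \<beta>) u) (NTmap \<beta> (Cod A u) \<cdot> NTmap \<alpha> (Cod A u))
           (NTmap \<beta> (Dom A u) \<cdot> NTmap \<alpha> (Dom A u)) (Far (NTdom \<alpha>) u)"
        using pb_paste[OF cart_pb[OF b u] cart_pb[OF a u, unfolded c]] by simp
      then show ?thesis using u A_dom_obj A_cod_obj by (simp add: CartNt_simps)
    qed
  qed (simp_all add: CartNt_simps)
qed

lemma iso_comp: assumes "iso (CartNt A D) \<alpha>" "x \<in> Obj A" shows "iso D (NTmap \<alpha> x)"
proof -
  obtain \<beta> where a: "cartesian A D \<alpha>" and b: "cartesian A D \<beta>" "NTdom \<beta> = NTcod \<alpha>" "NTcod \<beta> = NTdom \<alpha>"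
    and e1: "Comp (CartNt A D) \<beta> \<alpha> = Id (CartNt A D) (NTdom \<alpha>)"
    and e2: "Comp (CartNt A D) \<alpha> \<beta> = Id (CartNt A D) (NTcod \<alpha>)"
    using assms(1) unfolding iso_def hom_def by (auto simp: CartNt_simps)
  have na: "is_ntrans A D \<alpha>" and nb: "is_ntrans A D \<beta>" using a b cart_nt by auto
  have x1: "NTmap \<beta> x \<cdot> NTmap \<alpha> x = Id D (Fob (NTdom \<alpha>) x)"
    using arg_cong[OF e1, of "\<lambda>\<gamma>. NTmap \<gamma> x"] assms(2) by (simp add: CartNt_simps)
  have x2: "NTmap \<alpha> x \<cdot> NTmap \<beta> x = Id D (Fob (NTcod \<alpha>) x)"
    using arg_cong[OF e2, of "\<lambda>\<gamma>. NTmap \<gamma> x"] assms(2) by (simp add: CartNt_simps)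
  show ?thesis
    by (rule iso_intro) (use NT_arr[OF na assms(2)] NT_arr[OF nb assms(2)] b x1 x2 in auto)
qed

end


context setting begin

lemma cart_lift:
  assumes e: "cartesian A D e" "\<forall>x\<in>Obj A. NTmap e x \<in> E"
  and m: "cartesian A D m" "\<forall>x\<in>Obj A. NTmap m x \<in> M"
  and f: "cartesian A D f" "NTdom f = NTdom e" "NTcod f = NTdom m"
  and g: "cartesian A D g" "NTdom g = NTcod e" "NTcod g = NTcod m"
  and sq: "Comp (CartNt A D) g e = Comp (CartNt A D) m f"
  shows "\<exists>!d. d \<in> hom (CartNt A D) (NTcod e) (NTdom m) \<and> Comp (CartNt A D) d e = f \<and> Comp (CartNt A D) m d = g"
proof -
  define F where "F = NTdom e"
  define G where "G = NTcod e"
  define H where "H = NTdom m"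
  define K where "K = NTcod m"
  have ne: "is_ntrans A D e" and nm: "is_ntrans A D m" and nf: "is_ntrans A D f" and ng: "is_ntrans A D g"
    using e m f g cart_nt by auto
  have fF: "is_functor A D F" "is_functor A D G" "is_functor A D H" "is_functor A D K"
    unfolding F_def G_def H_def K_def using ne nm NT_fun by auto
  have ax: "NTmap e x \<in> Arr D" "Dom D (NTmap e x) = Fob F x" "Cod D (NTmap e x) = Fob G x"
     "NTmap m x \<in> Arr D" "Dom D (NTmap m x) = Fob H x" "Cod D (NTmap m x) = Fob K x"
     "NTmap f x \<in> Arr D" "Dom D (NTmap f x) = Fob F x" "Cod D (NTmap f x) = Fob H x"
     "NTmap g x \<in> Arr D" "Dom D (NTmap g x) = Fob G x" "Cod D (NTmap g x) = Fob K x"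
     "NTmap e x \<in> E" "NTmap m x \<in> M"
    if "x \<in> Obj A" for x
    using NT_arr[OF ne that] NT_arr[OF nm that] NT_arr[OF nf that] NT_arr[OF ng that] f g e m that
    unfolding F_def G_def H_def K_def by auto
  have au: "Far F u \<in> Arr D" "Dom D (Far F u) = Fob F (Dom A u)" "Cod D (Far F u) = Fob F (Cod A u)"
     "Far G u \<in> Arr D" "Dom D (Far G u) = Fob G (Dom A u)" "Cod D (Far G u) = Fob G (Cod A u)"
     "Far H u \<in> Arr D" "Dom D (Far H u) = Fob H (Dom A u)" "Cod D (Far H u) = Fob H (Cod A u)"
     "Far K u \<in> Arr D" "Dom D (Far K u) = Fob K (Dom A u)" "Cod D (Far K u) = Fob K (Cod A u)"
     "Dom A u \<in> Obj A" "Cod A u \<in> Obj A"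
    if "u \<in> Arr A" for u
    using F_arr[OF fF(1) that] F_arr[OF fF(2) that] F_arr[OF fF(3) that] F_arr[OF fF(4) that]
      A_dom_obj A_cod_obj that by auto
  have nat: "Far G u \<cdot> NTmap e (Dom A u) = NTmap e (Cod A u) \<cdot> Far F u"
    "Far K u \<cdot> NTmap m (Dom A u) = NTmap m (Cod A u) \<cdot> Far H u"
    "Far H u \<cdot> NTmap f (Dom A u) = NTmap f (Cod A u) \<cdot> Far F u"
    "Far K u \<cdot> NTmap g (Dom A u) = NTmap g (Cod A u) \<cdot> Far G u"
    if "u \<in> Arr A" for u
    using NT_nat[OF ne that] NT_nat[OF nm that] NT_nat[OF nf that] NT_nat[OF ng that] f g
    unfolding F_def G_def H_def K_def by auto
  have sqx: "NTmap g x \<cdot> NTmap e x = NTmap m x \<cdot> NTmap f x" if "x \<in> Obj A" for x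
    using arg_cong[OF sq, of "\<lambda>\<gamma>. NTmap \<gamma> x"] that by (simp add: CartNt_simps)
  have lx: "\<exists>!d. d \<in> hom D (Fob G x) (Fob H x) \<and> d \<cdot> NTmap e x = NTmap f x \<and> NTmap m x \<cdot> d = NTmap g x"
    if x: "x \<in> Obj A" for x
  proof -
    have "\<exists>!d. d \<in> hom D (Cod D (NTmap e x)) (Dom D (NTmap m x)) \<and> d \<cdot> NTmap e x = NTmap f x \<and> NTmap m x \<cdot> d = NTmap g x"
      by (rule lift) (use ax[OF x] sqx[OF x] in auto)
    then show ?thesis using ax[OF x] by simp
  qed
  define dm where "dm x = (if x \<in> Obj A then (THE d. d \<in> hom D (Fob G x) (Fob H x) \<and> d \<cdot> NTmap e x = NTmap f x \<and> NTmap m x \<cdot> d = NTmap g x) else undefined)" for x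
  have dx: "dm x \<in> Arr D" "Dom D (dm x) = Fob G x" "Cod D (dm x) = Fob H x" "dm x \<cdot> NTmap e x = NTmap f x" "NTmap m x \<cdot> dm x = NTmap g x"
    if x: "x \<in> Obj A" for x
  proof -
    have "dm x \<in> hom D (Fob G x) (Fob H x) \<and> dm x \<cdot> NTmap e x = NTmap f x \<and> NTmap m x \<cdot> dm x = NTmap g x"
      unfolding dm_def using x theI'[OF lx[OF x]] by simp
    then show "dm x \<in> Arr D" "Dom D (dm x) = Fob G x" "Cod D (dm x) = Fob H x" "dm x \<cdot> NTmap e x = NTmap f x" "NTmap m x \<cdot> dm x = NTmap g x"
      unfolding hom_def by auto
  qed
  have dnat: "Far H u \<cdot> dm (Dom A u) = dm (Cod A u) \<cdot> Far G u" if u: "u \<in> Arr A" for u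
  proof -
    define x where "x = Dom A u"
    define y where "y = Cod A u"
    have xy: "x \<in> Obj A" "y \<in> Obj A" using au[OF u] x_def y_def by auto
    note U = au[OF u, folded x_def y_def] and X = ax[OF xy(1)] and Y = ax[OF xy(2)]
      and DX = dx[OF xy(1)] and DY = dx[OF xy(2)] and N = nat[OF u, folded x_def y_def]
    show ?thesis unfolding x_def[symmetric] y_def[symmetric]
    proof (rule lift_uniq[OF X(13) Y(14)])
      have "(Far H u \<cdot> dm x) \<cdot> NTmap e x = Far H u \<cdot> (dm x \<cdot> NTmap e x)" using U X DX(1-3) by (simp add: assoc)
      also have "\<dots> = Far H u \<cdot> NTmap f x" using DX(4) by simp
      also have "\<dots> = NTmap f y \<cdot> Far F u" using N(3) by simp
      also have "\<dots> = (dm y \<cdot> NTmap e y) \<cdot> Far F u" using DY(4) by simp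
      also have "\<dots> = dm y \<cdot> (NTmap e y \<cdot> Far F u)" using U Y DY(1-3) by (simp add: assoc)
      also have "\<dots> = dm y \<cdot> (Far G u \<cdot> NTmap e x)" using N(1) by simp
      also have "\<dots> = (dm y \<cdot> Far G u) \<cdot> NTmap e x" using U X DY(1-3) by (simp add: assoc)
      finally show "(Far H u \<cdot> dm x) \<cdot> NTmap e x = (dm y \<cdot> Far G u) \<cdot> NTmap e x" .
      have "NTmap m y \<cdot> (Far H u \<cdot> dm x) = (NTmap m y \<cdot> Far H u) \<cdot> dm x" using U Y DX(1-3) by (simp add: assoc)
      also have "\<dots> = (Far K u \<cdot> NTmap m x) \<cdot> dm x" using N(2) by simp
      also have "\<dots> = Far K u \<cdot> (NTmap m x \<cdot> dm x)" using U X DX(1-3) by (simp add: assoc)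
      also have "\<dots> = Far K u \<cdot> NTmap g x" using DX(5) by simp
      also have "\<dots> = NTmap g y \<cdot> Far G u" using N(4) by simp
      also have "\<dots> = (NTmap m y \<cdot> dm y) \<cdot> Far G u" using DY(5) by simp
      also have "\<dots> = NTmap m y \<cdot> (dm y \<cdot> Far G u)" using U Y DY(1-3) by (simp add: assoc)
      finally show "NTmap m y \<cdot> (Far H u \<cdot> dm x) = NTmap m y \<cdot> (dm y \<cdot> Far G u)" .
    qed (use U X Y DX DY in auto)
  qed
  define \<delta> where "\<delta> = \<lparr>NTdom = G, NTcod = H, NTmap = dm\<rparr>"
  have cd: "cartesian A D \<delta>"
  proof (rule cartI[where F = G and G = H])
    show "is_functor A D G" "is_functor A D H" using fF by auto
    show "NTmap \<delta> x \<in> Arr D \<and> Dom D (NTmap \<delta> x) = Fob G x \<and> Cod D (NTmap \<delta> x) = Fob H x" if "x \<in> Obj A" for x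
      using dx[OF that] unfolding \<delta>_def by simp
    show "NTmap \<delta> x = undefined" if "x \<notin> Obj A" for x using that unfolding \<delta>_def dm_def by simp
    show "is_pullback D (Far H u) (NTmap \<delta> (Cod A u)) (NTmap \<delta> (Dom A u)) (Far G u)" if u: "u \<in> Arr A" for u
    proof -
      define x where "x = Dom A u"
      define y where "y = Cod A u"
      have xy: "x \<in> Obj A" "y \<in> Obj A" using au[OF u] x_def y_def by auto
      note U = au[OF u, folded x_def y_def] and X = ax[OF xy(1)] and Y = ax[OF xy(2)]
        and DX = dx[OF xy(1)] and DY = dx[OF xy(2)]
      have R: "is_pullback D (Far K u) (NTmap m y) (NTmap m x) (Far H u)"
        using cart_pb[OF m(1) u] unfolding x_def y_def H_def K_def .
      have O: "is_pullback D (Far K u) (NTmap m y \<cdot> dm y) (NTmap m x \<cdot> dm x) (Far G u)"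
        using cart_pb[OF g(1) u] DX(5) DY(5) g unfolding x_def y_def G_def K_def by simp
      have "is_pullback D (Far H u) (dm y) (dm x) (Far G u)"
        by (rule pb_cancel[OF R O]) (use dnat[OF u] U X Y DX DY in \<open>auto simp: x_def y_def\<close>)
      then show ?thesis unfolding \<delta>_def x_def y_def by simp
    qed
  qed (simp_all add: \<delta>_def)
  have c1: "Comp (CartNt A D) \<delta> e = f"
  proof (rule ntrans_eqI)
    show "NTmap (Comp (CartNt A D) \<delta> e) x = NTmap f x" for x
      using dx NT_undef[OF nf] unfolding \<delta>_def by (cases "x \<in> Obj A") (auto simp: CartNt_simps)
  qed (use f in \<open>auto simp: CartNt_simps \<delta>_def H_def\<close>)
  have c2: "Comp (CartNt A D) m \<delta> = g"
  proof (rule ntrans_eqI)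
    show "NTmap (Comp (CartNt A D) m \<delta>) x = NTmap g x" for x
      using dx NT_undef[OF ng] unfolding \<delta>_def by (cases "x \<in> Obj A") (auto simp: CartNt_simps)
  qed (use g in \<open>auto simp: CartNt_simps \<delta>_def G_def K_def\<close>)
  have dh: "\<delta> \<in> hom (CartNt A D) (NTcod e) (NTdom m)"
    using cd unfolding hom_def by (simp add: CartNt_simps \<delta>_def G_def H_def)
  have un: "\<delta>' = \<delta>" if d': "\<delta>' \<in> hom (CartNt A D) (NTcod e) (NTdom m)" "Comp (CartNt A D) \<delta>' e = f"
    "Comp (CartNt A D) m \<delta>' = g" for \<delta>'
  proof -
    have c': "cartesian A D \<delta>'" "NTdom \<delta>' = G" "NTcod \<delta>' = H"
      using d' unfolding hom_def by (auto simp: CartNt_simps G_def H_def)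
    have n': "is_ntrans A D \<delta>'" using c' cart_nt by auto
    show ?thesis
    proof (rule ntrans_eqI)
      show "NTmap \<delta>' x = NTmap \<delta> x" for x
      proof (cases "x \<in> Obj A")
        case True
        have a1: "NTmap \<delta>' x \<cdot> NTmap e x = NTmap f x"
          using arg_cong[OF d'(2), of "\<lambda>\<gamma>. NTmap \<gamma> x"] True by (simp add: CartNt_simps)
        have a2: "NTmap m x \<cdot> NTmap \<delta>' x = NTmap g x"
          using arg_cong[OF d'(3), of "\<lambda>\<gamma>. NTmap \<gamma> x"] True by (simp add: CartNt_simps)
        have "NTmap \<delta>' x \<in> hom D (Fob G x) (Fob H x)" "dm x \<in> hom D (Fob G x) (Fob H x)"
          using NT_arr[OF n' True] c' dx[OF True] unfolding hom_def by auto
        then have "NTmap \<delta>' x = dm x" using lx[OF True] a1 a2 dx[OF True] by blast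
        then show ?thesis unfolding \<delta>_def by simp
      next
        case False
        then show ?thesis using NT_undef[OF n' False] unfolding \<delta>_def dm_def by simp
      qed
    qed (use c' in \<open>simp_all add: \<delta>_def\<close>)
  qed
  show ?thesis using dh c1 c2 un by blast
qed

end


context dcat begin
lemma pb_ex1: assumes "is_pullback D f g p1 p2" "q1 \<in> Arr D" "q2 \<in> Arr D"
  "Dom D q1 = Dom D q2" "Cod D q1 = Dom D f" "Cod D q2 = Dom D g" "f \<cdot> q1 = g \<cdot> q2"
  shows "\<exists>!h. h \<in> Arr D \<and> Dom D h = Dom D q1 \<and> Cod D h = Dom D p1 \<and> p1 \<cdot> h = q1 \<and> p2 \<cdot> h = q2"
proof -
  obtain h where h: "h \<in> Arr D \<and> Dom D h = Dom D q1 \<and> Cod D h = Dom D p1 \<and> p1 \<cdot> h = q1 \<and> p2 \<cdot> h = q2"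
    using pb_ex[OF assms] by blast
  moreover have "h' = h" if "h' \<in> Arr D \<and> Dom D h' = Dom D q1 \<and> Cod D h' = Dom D p1 \<and> p1 \<cdot> h' = q1 \<and> p2 \<cdot> h' = q2" for h'
    using pb_uniq[OF assms(1), of h' h] that h by auto
  ultimately show ?thesis by blast
qed
end

context setting begin

lemma cart_factor:
  assumes phi: "cartesian A D \<phi>"
  shows "\<exists>e m. cartesian A D e \<and> (\<forall>x\<in>Obj A. NTmap e x \<in> E) \<and> cartesian A D m \<and> (\<forall>x\<in>Obj A. NTmap m x \<in> M)
     \<and> NTcod e = NTdom m \<and> Comp (CartNt A D) m e = \<phi>"
proof -
  define F where "F = NTdom \<phi>"
  define K where "K = NTcod \<phi>"
  have np: "is_ntrans A D \<phi>" using phi cart_nt by auto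
  have fF: "is_functor A D F" "is_functor A D K" unfolding F_def K_def using np NT_fun by auto
  have ax: "NTmap \<phi> x \<in> Arr D" "Dom D (NTmap \<phi> x) = Fob F x" "Cod D (NTmap \<phi> x) = Fob K x"
    if "x \<in> Obj A" for x using NT_arr[OF np that] unfolding F_def K_def by auto
  have au: "Far F u \<in> Arr D" "Dom D (Far F u) = Fob F (Dom A u)" "Cod D (Far F u) = Fob F (Cod A u)"
     "Far K u \<in> Arr D" "Dom D (Far K u) = Fob K (Dom A u)" "Cod D (Far K u) = Fob K (Cod A u)"
     "Dom A u \<in> Obj A" "Cod A u \<in> Obj A"
    if "u \<in> Arr A" for u
    using F_arr[OF fF(1) that] F_arr[OF fF(2) that] A_dom_obj A_cod_obj that by auto
  have natp: "Far K u \<cdot> NTmap \<phi> (Dom A u) = NTmap \<phi> (Cod A u) \<cdot> Far F u" if "u \<in> Arr A" for u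
    using NT_nat[OF np that] unfolding F_def K_def by auto
  have cpb: "is_pullback D (Far K u) (NTmap \<phi> (Cod A u)) (NTmap \<phi> (Dom A u)) (Far F u)" if "u \<in> Arr A" for u
    using cart_pb[OF phi that] unfolding F_def K_def .
  obtain e0 m0 where em0: "e0 \<in> E" "m0 \<in> M" "Cod D e0 = Dom D m0" "m0 \<cdot> e0 = NTmap \<phi> t"
    using factor[OF ax(1)[OF t_obj]] by blast
  define I where "I = Cod D e0"
  have T0: "e0 \<in> Arr D" "m0 \<in> Arr D" "Dom D e0 = Fob F t" "Cod D e0 = I" "Dom D m0 = I" "Cod D m0 = Fob K t"
    using em0 E_arr M_arr ax[OF t_obj] I_def by (auto, metis dom_comp, metis cod_comp)
  have tmK: "Far K (tm x) \<in> Arr D" "Dom D (Far K (tm x)) = Fob K x" "Cod D (Far K (tm x)) = Fob K t"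
       "Far F (tm x) \<in> Arr D" "Dom D (Far F (tm x)) = Fob F x" "Cod D (Far F (tm x)) = Fob F t"
    if "x \<in> Obj A" for x using au[OF tm(1)[OF that]] tm[OF that] by auto
  define pbp where "pbp x = (SOME p. is_pullback D (Far K (tm x)) m0 (fst p) (snd p))" for x
  define mx where "mx x = fst (pbp x)" for x
  define kx where "kx x = snd (pbp x)" for x
  have PB: "is_pullback D (Far K (tm x)) m0 (mx x) (kx x)" if x: "x \<in> Obj A" for x
  proof -
    have "\<exists>p1 p2. is_pullback D (Far K (tm x)) m0 p1 p2"
      using pbs tmK[OF x] T0 unfolding has_pullbacks_def by auto
    then have "\<exists>p. is_pullback D (Far K (tm x)) m0 (fst p) (snd p)" by auto
    then show ?thesis unfolding mx_def kx_def pbp_def by (rule someI_ex)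
  qed
  define P where "P x = Dom D (mx x)" for x
  have TP: "mx x \<in> Arr D" "kx x \<in> Arr D" "Dom D (mx x) = P x" "Dom D (kx x) = P x" "Cod D (mx x) = Fob K x"
     "Cod D (kx x) = I" "P x \<in> Obj D"
    if x: "x \<in> Obj A" for x using pbD[OF PB[OF x]] tmK[OF x] T0 P_def by auto
  have PBs: "is_pullback D m0 (Far K (tm x)) (kx x) (mx x)" if x: "x \<in> Obj A" for x
    using pb_sym[OF PB[OF x]] .
  have PBc: "Far K (tm x) \<cdot> mx x = m0 \<cdot> kx x" if x: "x \<in> Obj A" for x using pbD[OF PB[OF x]] by simp
  have Ktm: "Far K (tm (Cod A u)) \<cdot> Far K u = Far K (tm (Dom A u))"
    "Far F (tm (Cod A u)) \<cdot> Far F u = Far F (tm (Dom A u))" if u: "u \<in> Arr A" for u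
  proof -
    have a: "tm (Cod A u) \<in> Arr A" "Cod A u = Dom A (tm (Cod A u))" using tm au[OF u] by auto
    show "Far K (tm (Cod A u)) \<cdot> Far K u = Far K (tm (Dom A u))"
      "Far F (tm (Cod A u)) \<cdot> Far F u = Far F (tm (Dom A u))"
      using F_comp[OF fF(2) u a] F_comp[OF fF(1) u a] tm_comp[OF u] by metis+
  qed
  define Hv where "Hv v = (THE h. h \<in> Arr D \<and> Dom D h = P (Dom A v) \<and> Cod D h = P (Cod A v)
       \<and> mx (Cod A v) \<cdot> h = Far K v \<cdot> mx (Dom A v) \<and> kx (Cod A v) \<cdot> h = kx (Dom A v))" for v
  have Hv_ex1: "\<exists>!h. h \<in> Arr D \<and> Dom D h = P (Dom A v) \<and> Cod D h = P (Cod A v)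
       \<and> mx (Cod A v) \<cdot> h = Far K v \<cdot> mx (Dom A v) \<and> kx (Cod A v) \<cdot> h = kx (Dom A v)" if v: "v \<in> Arr A" for v
  proof -
    define x where "x = Dom A v"
    define y where "y = Cod A v"
    have xy: "x \<in> Obj A" "y \<in> Obj A" using au[OF v] x_def y_def by auto
    note U = au[OF v, folded x_def y_def] and X = TP[OF xy(1)] and Y = TP[OF xy(2)]
    have "Far K (tm y) \<cdot> (Far K v \<cdot> mx x) = (Far K (tm y) \<cdot> Far K v) \<cdot> mx x"
      using U X tmK[OF xy(2)] by (simp add: assoc)
    also have "\<dots> = m0 \<cdot> kx x" using Ktm(1)[OF v] PBc[OF xy(1)] unfolding x_def y_def by simp
    finally have c: "Far K (tm y) \<cdot> (Far K v \<cdot> mx x) = m0 \<cdot> kx x" .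
    have "\<exists>!h. h \<in> Arr D \<and> Dom D h = Dom D (Far K v \<cdot> mx x) \<and> Cod D h = Dom D (mx y) \<and> mx y \<cdot> h = Far K v \<cdot> mx x \<and> kx y \<cdot> h = kx x"
      by (rule pb_ex1[OF PB[OF xy(2)]]) (use U X Y tmK[OF xy(2)] T0 c in auto)
    then show ?thesis using U X Y unfolding x_def[symmetric] y_def[symmetric] by simp
  qed
  have Hv: "Hv v \<in> Arr D" "Dom D (Hv v) = P (Dom A v)" "Cod D (Hv v) = P (Cod A v)"
       "mx (Cod A v) \<cdot> Hv v = Far K v \<cdot> mx (Dom A v)" "kx (Cod A v) \<cdot> Hv v = kx (Dom A v)"
    if v: "v \<in> Arr A" for v
    using theI'[OF Hv_ex1[OF v]] unfolding Hv_def[symmetric] by auto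
  have Hv_uniq: "Hv v = h" if v: "v \<in> Arr A" and h: "h \<in> Arr D" "Dom D h = P (Dom A v)" "Cod D h = P (Cod A v)"
       "mx (Cod A v) \<cdot> h = Far K v \<cdot> mx (Dom A v)" "kx (Cod A v) \<cdot> h = kx (Dom A v)" for v h
    using Hv_ex1[OF v] Hv[OF v] h by blast
  define ex where "ex x = (THE h. h \<in> Arr D \<and> Dom D h = Fob F x \<and> Cod D h = P x
       \<and> mx x \<cdot> h = NTmap \<phi> x \<and> kx x \<cdot> h = e0 \<cdot> Far F (tm x))" for x
  have ex: "ex x \<in> Arr D" "Dom D (ex x) = Fob F x" "Cod D (ex x) = P x"
       "mx x \<cdot> ex x = NTmap \<phi> x" "kx x \<cdot> ex x = e0 \<cdot> Far F (tm x)" if x: "x \<in> Obj A" for x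
  proof -
    note X = TP[OF x] and TK = tmK[OF x] and PX = ax[OF x]
    have "Far K (tm x) \<cdot> NTmap \<phi> x = NTmap \<phi> t \<cdot> Far F (tm x)"
      using natp[OF tm(1)[OF x]] tm[OF x] by simp
    also have "\<dots> = (m0 \<cdot> e0) \<cdot> Far F (tm x)" using em0(4) by simp
    also have "\<dots> = m0 \<cdot> (e0 \<cdot> Far F (tm x))" using T0 TK by (simp add: assoc)
    finally have c: "Far K (tm x) \<cdot> NTmap \<phi> x = m0 \<cdot> (e0 \<cdot> Far F (tm x))" .
    have "\<exists>!h. h \<in> Arr D \<and> Dom D h = Dom D (NTmap \<phi> x) \<and> Cod D h = Dom D (mx x) \<and> mx x \<cdot> h = NTmap \<phi> x \<and> kx x \<cdot> h = e0 \<cdot> Far F (tm x)"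
      by (rule pb_ex1[OF PB[OF x]]) (use X TK T0 PX c in auto)
    then have "\<exists>!h. h \<in> Arr D \<and> Dom D h = Fob F x \<and> Cod D h = P x
       \<and> mx x \<cdot> h = NTmap \<phi> x \<and> kx x \<cdot> h = e0 \<cdot> Far F (tm x)" using PX X by simp
    from theI'[OF this] show "ex x \<in> Arr D" "Dom D (ex x) = Fob F x" "Cod D (ex x) = P x"
       "mx x \<cdot> ex x = NTmap \<phi> x" "kx x \<cdot> ex x = e0 \<cdot> Far F (tm x)" unfolding ex_def[symmetric] by auto
  qed
  define H where "H = \<lparr>Fob = (\<lambda>x. if x \<in> Obj A then P x else undefined), Far = (\<lambda>v. if v \<in> Arr A then Hv v else undefined)\<rparr>"
  have HF: "is_functor A D H"
    unfolding is_functor_def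
  proof (intro conjI ballI allI impI)
    show "Fob H x \<in> Obj D" if "x \<in> Obj A" for x using TP[OF that] that unfolding H_def by simp
    show "Far H u \<in> hom D (Fob H (Dom A u)) (Fob H (Cod A u))" if u: "u \<in> Arr A" for u
      using Hv[OF u] u au[OF u] unfolding H_def hom_def by simp
    show "Far H (Id A x) = Id D (Fob H x)" if x: "x \<in> Obj A" for x
    proof -
      have i: "Id A x \<in> Arr A" "Dom A (Id A x) = x" "Cod A (Id A x) = x" using x A_id_arr A_dom_id A_cod_id by auto
      have "Hv (Id A x) = Id D (P x)"
        by (rule Hv_uniq[OF i(1)]) (use i TP[OF x] F_id[OF fF(2) x] in auto)
      then show ?thesis using i x unfolding H_def by simp
    qed
    show "Far H (Comp A v u) = Far H v \<cdot> Far H u" if u: "u \<in> Arr A" and v: "v \<in> Arr A" and uv: "Cod A u = Dom A v" for u v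
    proof -
      have vu: "Comp A v u \<in> Arr A" "Dom A (Comp A v u) = Dom A u" "Cod A (Comp A v u) = Cod A v"
        using u v uv A_comp_arr A_dom_comp A_cod_comp by auto
      define x where "x = Dom A u"
      define y where "y = Cod A u"
      define z where "z = Cod A v"
      have xyz: "x \<in> Obj A" "y \<in> Obj A" "z \<in> Obj A" using au[OF u] au[OF v] x_def y_def z_def by auto
      note HU = Hv[OF u, folded x_def y_def] and HV = Hv[OF v, folded z_def, folded uv, folded y_def]
      note UU = au[OF u, folded x_def y_def] and VV = au[OF v, folded z_def, folded uv, folded y_def]
      note X = TP[OF xyz(1)] and Y = TP[OF xyz(2)] and Z = TP[OF xyz(3)]
      have "Hv (Comp A v u) = Hv v \<cdot> Hv u"
      proof (rule Hv_uniq[OF vu(1)])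
        have "mx z \<cdot> (Hv v \<cdot> Hv u) = (mx z \<cdot> Hv v) \<cdot> Hv u" using HU(1-3) HV(1-3) Z by (simp add: assoc)
        also have "\<dots> = (Far K v \<cdot> mx y) \<cdot> Hv u" using HV(4) by simp
        also have "\<dots> = Far K v \<cdot> (mx y \<cdot> Hv u)" using HU(1-3) VV Y by (simp add: assoc)
        also have "\<dots> = Far K v \<cdot> (Far K u \<cdot> mx x)" using HU(4) by simp
        also have "\<dots> = (Far K v \<cdot> Far K u) \<cdot> mx x" using UU VV X by (simp add: assoc)
        also have "\<dots> = Far K (Comp A v u) \<cdot> mx x" using F_comp[OF fF(2) u v uv] by simp
        finally show "mx (Cod A (Comp A v u)) \<cdot> (Hv v \<cdot> Hv u) = Far K (Comp A v u) \<cdot> mx (Dom A (Comp A v u))"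
          using vu unfolding x_def z_def by simp
        have "kx z \<cdot> (Hv v \<cdot> Hv u) = (kx z \<cdot> Hv v) \<cdot> Hv u" using HU(1-3) HV(1-3) Z by (simp add: assoc)
        also have "\<dots> = kx x" using HV(5) HU(5) by simp
        finally show "kx (Cod A (Comp A v u)) \<cdot> (Hv v \<cdot> Hv u) = kx (Dom A (Comp A v u))"
          using vu unfolding x_def z_def by simp
      qed (use HU(1-3) HV(1-3) vu in \<open>auto simp: x_def z_def\<close>)
      then show ?thesis using u v vu unfolding H_def by simp
    qed
  qed (simp_all add: H_def)
  have FobH: "Fob H x = P x" if "x \<in> Obj A" for x using that unfolding H_def by simp
  have FarH: "Far H u = Hv u" if "u \<in> Arr A" for u using that unfolding H_def by simp
  define mN where "mN = \<lparr>NTdom = H, NTcod = K, NTmap = (\<lambda>x. if x \<in> Obj A then mx x else undefined)\<rparr>"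
  define eN where "eN = \<lparr>NTdom = F, NTcod = H, NTmap = (\<lambda>x. if x \<in> Obj A then ex x else undefined)\<rparr>"
  have mpb: "is_pullback D (Far K u) (mx (Cod A u)) (mx (Dom A u)) (Hv u)" if u: "u \<in> Arr A" for u
  proof -
    define x where "x = Dom A u"
    define y where "y = Cod A u"
    have xy: "x \<in> Obj A" "y \<in> Obj A" using au[OF u] x_def y_def by auto
    note HU = Hv[OF u, folded x_def y_def] and UU = au[OF u, folded x_def y_def]
    note X = TP[OF xy(1)] and Y = TP[OF xy(2)]
    have O: "is_pullback D m0 (Far K (tm y) \<cdot> Far K u) (kx y \<cdot> Hv u) (mx x)"
      using PBs[OF xy(1)] Ktm(1)[OF u] HU(5) unfolding x_def y_def by simp
    have "is_pullback D (mx y) (Far K u) (Hv u) (mx x)"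
      by (rule pb_cancel[OF PBs[OF xy(2)] O]) (use HU UU X Y tmK[OF xy(2)] in auto)
    then show ?thesis using pb_sym unfolding x_def y_def by blast
  qed
  have mC: "cartesian A D mN"
  proof (rule cartI[where F = H and G = K])
    show "is_functor A D H" "is_functor A D K" using HF fF by auto
    show "NTmap mN x \<in> Arr D \<and> Dom D (NTmap mN x) = Fob H x \<and> Cod D (NTmap mN x) = Fob K x" if "x \<in> Obj A" for x
      using TP[OF that] FobH[OF that] that unfolding mN_def by simp
    show "is_pullback D (Far K u) (NTmap mN (Cod A u)) (NTmap mN (Dom A u)) (Far H u)" if u: "u \<in> Arr A" for u
      using mpb[OF u] FarH[OF u] au[OF u] unfolding mN_def by simp
  qed (simp_all add: mN_def)
  have enat: "Hv u \<cdot> ex (Dom A u) = ex (Cod A u) \<cdot> Far F u" if u: "u \<in> Arr A" for u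
  proof -
    define x where "x = Dom A u"
    define y where "y = Cod A u"
    have xy: "x \<in> Obj A" "y \<in> Obj A" using au[OF u] x_def y_def by auto
    note HU = Hv[OF u, folded x_def y_def] and UU = au[OF u, folded x_def y_def]
    note X = TP[OF xy(1)] and Y = TP[OF xy(2)] and EX = ex[OF xy(1)] and EY = ex[OF xy(2)]
    show ?thesis unfolding x_def[symmetric] y_def[symmetric]
    proof (rule pb_uniq[OF PB[OF xy(2)]])
      have "mx y \<cdot> Hv u \<cdot> ex x = (mx y \<cdot> Hv u) \<cdot> ex x" using HU(1-3) EX(1-3) Y by (simp add: assoc)
      also have "\<dots> = (Far K u \<cdot> mx x) \<cdot> ex x" using HU(4) by simp
      also have "\<dots> = Far K u \<cdot> (mx x \<cdot> ex x)" using UU X EX(1-3) by (simp add: assoc)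
      also have "\<dots> = Far K u \<cdot> NTmap \<phi> x" using EX(4) by simp
      also have "\<dots> = NTmap \<phi> y \<cdot> Far F u" using natp[OF u] unfolding x_def y_def by simp
      also have "\<dots> = (mx y \<cdot> ex y) \<cdot> Far F u" using EY(4) by simp
      also have "\<dots> = mx y \<cdot> ex y \<cdot> Far F u" using UU Y EY(1-3) by (simp add: assoc)
      finally show "mx y \<cdot> Hv u \<cdot> ex x = mx y \<cdot> ex y \<cdot> Far F u" .
      have "kx y \<cdot> Hv u \<cdot> ex x = (kx y \<cdot> Hv u) \<cdot> ex x" using HU(1-3) EX(1-3) Y by (simp add: assoc)
      also have "\<dots> = e0 \<cdot> Far F (tm x)" using HU(5) EX(5) by simp
      also have "\<dots> = e0 \<cdot> (Far F (tm y) \<cdot> Far F u)" using Ktm(2)[OF u] unfolding x_def y_def by simp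
      also have "\<dots> = (e0 \<cdot> Far F (tm y)) \<cdot> Far F u" using UU T0 tmK[OF xy(2)] by (simp add: assoc)
      also have "\<dots> = (kx y \<cdot> ex y) \<cdot> Far F u" using EY(5) by simp
      also have "\<dots> = kx y \<cdot> ex y \<cdot> Far F u" using UU Y EY(1-3) by (simp add: assoc)
      finally show "kx y \<cdot> Hv u \<cdot> ex x = kx y \<cdot> ex y \<cdot> Far F u" .
    qed (use HU(1-3) EX(1-3) EY(1-3) UU X Y in auto)
  qed
  have eC: "cartesian A D eN"
  proof (rule cartI[where F = F and G = H])
    show "is_functor A D F" "is_functor A D H" using HF fF by auto
    show "NTmap eN x \<in> Arr D \<and> Dom D (NTmap eN x) = Fob F x \<and> Cod D (NTmap eN x) = Fob H x" if "x \<in> Obj A" for x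
      using ex[OF that] FobH[OF that] that unfolding eN_def by simp
    show "is_pullback D (Far H u) (NTmap eN (Cod A u)) (NTmap eN (Dom A u)) (Far F u)" if u: "u \<in> Arr A" for u
    proof -
      define x where "x = Dom A u"
      define y where "y = Cod A u"
      have xy: "x \<in> Obj A" "y \<in> Obj A" using au[OF u] x_def y_def by auto
      note HU = Hv[OF u, folded x_def y_def] and UU = au[OF u, folded x_def y_def]
      note X = TP[OF xy(1)] and Y = TP[OF xy(2)] and EX = ex[OF xy(1)] and EY = ex[OF xy(2)]
      have O: "is_pullback D (Far K u) (mx y \<cdot> ex y) (mx x \<cdot> ex x) (Far F u)"
        using cpb[OF u] EX(4) EY(4) unfolding x_def y_def by simp
      have "is_pullback D (Hv u) (ex y) (ex x) (Far F u)"
        by (rule pb_cancel[OF mpb[OF u, folded x_def y_def] O])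
           (use enat[OF u, folded x_def y_def] HU(1-3) EX(1-3) EY(1-3) UU X Y in auto)
      then show ?thesis using FarH[OF u] xy unfolding eN_def x_def y_def by simp
    qed
  qed (simp_all add: eN_def)
  have eE: "NTmap eN x \<in> E" if x: "x \<in> Obj A" for x
  proof -
    note X = TP[OF x] and EX = ex[OF x] and TK = tmK[OF x]
    have O: "is_pullback D (Far K (tm x)) (m0 \<cdot> e0) (mx x \<cdot> ex x) (Far F (tm x))"
      using cpb[OF tm(1)[OF x]] tm[OF x] em0(4) EX(4) by simp
    have "is_pullback D (kx x) e0 (ex x) (Far F (tm x))"
      by (rule pb_cancel[OF PB[OF x] O]) (use EX X TK T0 in auto)
    then show ?thesis using E_pb em0(1) x unfolding eN_def by auto
  qed
  have mM: "NTmap mN x \<in> M" if x: "x \<in> Obj A" for x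
    using M_pb[OF PB[OF x] em0(2)] x unfolding mN_def by simp
  have comp: "Comp (CartNt A D) mN eN = \<phi>"
  proof (rule ntrans_eqI)
    show "NTmap (Comp (CartNt A D) mN eN) x = NTmap \<phi> x" for x
      using ex NT_undef[OF np] by (cases "x \<in> Obj A") (auto simp: CartNt_simps mN_def eN_def)
  qed (simp_all add: CartNt_simps mN_def eN_def F_def K_def)
  show ?thesis
    by (rule exI[of _ eN], rule exI[of _ mN]) (use eC mC eE mM comp in \<open>simp add: eN_def mN_def\<close>)
qed

end


context setting begin

lemma ofs_cart: "ofs (CartNt A D) (componentwise A D E \<inter> {\<alpha>. cartesian A D \<alpha>}) (componentwise A D M \<inter> {\<alpha>. cartesian A D \<alpha>})"
  unfolding ofs_def
proof (intro conjI)
  show "componentwise A D E \<inter> {\<alpha>. cartesian A D \<alpha>} \<subseteq> Arr (CartNt A D)"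
    "componentwise A D M \<inter> {\<alpha>. cartesian A D \<alpha>} \<subseteq> Arr (CartNt A D)" by (auto simp: CartNt_simps)
  show "\<forall>f. iso (CartNt A D) f \<longrightarrow> f \<in> componentwise A D E \<inter> {\<alpha>. cartesian A D \<alpha>} \<and> f \<in> componentwise A D M \<inter> {\<alpha>. cartesian A D \<alpha>}"
  proof (intro allI impI)
    fix f assume i: "iso (CartNt A D) f"
    then have c: "cartesian A D f" unfolding iso_def by (simp add: CartNt_simps)
    have "NTmap f x \<in> E \<and> NTmap f x \<in> M" if "x \<in> Obj A" for x using iso_comp[OF i that] iso_EM by blast
    then show "f \<in> componentwise A D E \<inter> {\<alpha>. cartesian A D \<alpha>} \<and> f \<in> componentwise A D M \<inter> {\<alpha>. cartesian A D \<alpha>}"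
      using c cart_nt unfolding componentwise_def by auto
  qed
  show "\<forall>f\<in>componentwise A D E \<inter> {\<alpha>. cartesian A D \<alpha>}. \<forall>g\<in>componentwise A D E \<inter> {\<alpha>. cartesian A D \<alpha>}.
      Cod (CartNt A D) f = Dom (CartNt A D) g \<longrightarrow> Comp (CartNt A D) g f \<in> componentwise A D E \<inter> {\<alpha>. cartesian A D \<alpha>}"
  proof (intro ballI impI)
    fix f g assume f: "f \<in> componentwise A D E \<inter> {\<alpha>. cartesian A D \<alpha>}" and g: "g \<in> componentwise A D E \<inter> {\<alpha>. cartesian A D \<alpha>}"
      and c: "Cod (CartNt A D) f = Dom (CartNt A D) g"
    have cf: "cartesian A D f" "cartesian A D g" "NTcod f = NTdom g" using f g c by (auto simp: CartNt_simps)
    have cc: "cartesian A D (Comp (CartNt A D) g f)" by (rule cart_comp[OF cf])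
    have "NTmap (Comp (CartNt A D) g f) x \<in> E" if x: "x \<in> Obj A" for x
    proof -
      have "NTmap g x \<cdot> NTmap f x \<in> E"
        by (rule E_comp) (use f g x cf NT_arr[OF cart_nt[OF cf(1)] x] NT_arr[OF cart_nt[OF cf(2)] x] in \<open>auto simp: componentwise_def\<close>)
      then show ?thesis using x by (simp add: CartNt_simps)
    qed
    then show "Comp (CartNt A D) g f \<in> componentwise A D E \<inter> {\<alpha>. cartesian A D \<alpha>}"
      using cc cart_nt unfolding componentwise_def by auto
  qed
  show "\<forall>f\<in>componentwise A D M \<inter> {\<alpha>. cartesian A D \<alpha>}. \<forall>g\<in>componentwise A D M \<inter> {\<alpha>. cartesian A D \<alpha>}.
      Cod (CartNt A D) f = Dom (CartNt A D) g \<longrightarrow> Comp (CartNt A D) g f \<in> componentwise A D M \<inter> {\<alpha>. cartesian A D \<alpha>}"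
  proof (intro ballI impI)
    fix f g assume f: "f \<in> componentwise A D M \<inter> {\<alpha>. cartesian A D \<alpha>}" and g: "g \<in> componentwise A D M \<inter> {\<alpha>. cartesian A D \<alpha>}"
      and c: "Cod (CartNt A D) f = Dom (CartNt A D) g"
    have cf: "cartesian A D f" "cartesian A D g" "NTcod f = NTdom g" using f g c by (auto simp: CartNt_simps)
    have cc: "cartesian A D (Comp (CartNt A D) g f)" by (rule cart_comp[OF cf])
    have "NTmap (Comp (CartNt A D) g f) x \<in> M" if x: "x \<in> Obj A" for x
    proof -
      have "NTmap g x \<cdot> NTmap f x \<in> M"
        by (rule M_comp) (use f g x cf NT_arr[OF cart_nt[OF cf(1)] x] NT_arr[OF cart_nt[OF cf(2)] x] in \<open>auto simp: componentwise_def\<close>)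
      then show ?thesis using x by (simp add: CartNt_simps)
    qed
    then show "Comp (CartNt A D) g f \<in> componentwise A D M \<inter> {\<alpha>. cartesian A D \<alpha>}"
      using cc cart_nt unfolding componentwise_def by auto
  qed
  show "\<forall>e\<in>componentwise A D E \<inter> {\<alpha>. cartesian A D \<alpha>}. \<forall>m\<in>componentwise A D M \<inter> {\<alpha>. cartesian A D \<alpha>}.
       \<forall>f\<in>hom (CartNt A D) (Dom (CartNt A D) e) (Dom (CartNt A D) m).
       \<forall>g\<in>hom (CartNt A D) (Cod (CartNt A D) e) (Cod (CartNt A D) m).
       Comp (CartNt A D) g e = Comp (CartNt A D) m f \<longrightarrow>
       (\<exists>!d. d \<in> hom (CartNt A D) (Cod (CartNt A D) e) (Dom (CartNt A D) m) \<and>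
             Comp (CartNt A D) d e = f \<and> Comp (CartNt A D) m d = g)"
  proof (intro ballI impI)
    fix e m f g
    assume e: "e \<in> componentwise A D E \<inter> {\<alpha>. cartesian A D \<alpha>}" and m: "m \<in> componentwise A D M \<inter> {\<alpha>. cartesian A D \<alpha>}"
      and f: "f \<in> hom (CartNt A D) (Dom (CartNt A D) e) (Dom (CartNt A D) m)"
      and g: "g \<in> hom (CartNt A D) (Cod (CartNt A D) e) (Cod (CartNt A D) m)"
      and sq: "Comp (CartNt A D) g e = Comp (CartNt A D) m f"
    have "\<exists>!d. d \<in> hom (CartNt A D) (NTcod e) (NTdom m) \<and> Comp (CartNt A D) d e = f \<and> Comp (CartNt A D) m d = g"
      by (rule cart_lift) (use e m f g sq in \<open>auto simp: componentwise_def hom_def CartNt_simps\<close>)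
    then show "\<exists>!d. d \<in> hom (CartNt A D) (Cod (CartNt A D) e) (Dom (CartNt A D) m) \<and>
             Comp (CartNt A D) d e = f \<and> Comp (CartNt A D) m d = g" by (simp add: CartNt_simps)
  qed
  show "\<forall>h\<in>Arr (CartNt A D). \<exists>e\<in>componentwise A D E \<inter> {\<alpha>. cartesian A D \<alpha>}.
      \<exists>m\<in>componentwise A D M \<inter> {\<alpha>. cartesian A D \<alpha>}. Cod (CartNt A D) e = Dom (CartNt A D) m \<and> Comp (CartNt A D) m e = h"
  proof
    fix h assume "h \<in> Arr (CartNt A D)"
    then have "cartesian A D h" by (simp add: CartNt_simps)
    from cart_factor[OF this] obtain e m where em: "cartesian A D e" "\<forall>x\<in>Obj A. NTmap e x \<in> E" "cartesian A D m"
      "\<forall>x\<in>Obj A. NTmap m x \<in> M" "NTcod e = NTdom m" "Comp (CartNt A D) m e = h" by blast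
    show "\<exists>e\<in>componentwise A D E \<inter> {\<alpha>. cartesian A D \<alpha>}.
      \<exists>m\<in>componentwise A D M \<inter> {\<alpha>. cartesian A D \<alpha>}. Cod (CartNt A D) e = Dom (CartNt A D) m \<and> Comp (CartNt A D) m e = h"
    proof (intro bexI conjI)
      show "Cod (CartNt A D) e = Dom (CartNt A D) m" using em(5) by (simp add: CartNt_simps)
      show "Comp (CartNt A D) m e = h" by (rule em(6))
      show "e \<in> componentwise A D E \<inter> {\<alpha>. cartesian A D \<alpha>}" using em cart_nt unfolding componentwise_def by auto
      show "m \<in> componentwise A D M \<inter> {\<alpha>. cartesian A D \<alpha>}" using em cart_nt unfolding componentwise_def by auto
    qed
  qed
qed

lemma E_eq: "{e. is_ntrans A D e \<and> NTmap e t \<in> E} \<inter> {\<alpha>. cartesian A D \<alpha>} = componentwise A D E \<inter> {\<alpha>. cartesian A D \<alpha>}"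
  using cart_E t_obj unfolding componentwise_def by auto

lemma M_eq: "{m. cartesian A D m \<and> NTmap m t \<in> M} \<inter> {\<alpha>. cartesian A D \<alpha>} = componentwise A D M \<inter> {\<alpha>. cartesian A D \<alpha>}"
  using cart_M t_obj cart_nt unfolding componentwise_def by auto

end

theorem proposition4p9:
  fixes A :: "('p,'b) cat" and D :: "('o,'a) cat"
    and E M :: "'a set" and t :: 'p
  assumes "category D" and "has_pullbacks D" and "stable_ofs D E M"
    and "category A" and "terminal A t"
  defines "E' \<equiv> {e. is_ntrans A D e \<and> NTmap e t \<in> E}"
    and "M' \<equiv> {m. cartesian A D m \<and> NTmap m t \<in> M}"
    and "Cart \<equiv> {\<alpha>. cartesian A D \<alpha>}"
  shows "ofs (CartNt A D) (E' \<inter> Cart) (M' \<inter> Cart)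
       \<and> ofs (CartNt A D) (componentwise A D E \<inter> Cart) (componentwise A D M \<inter> Cart)
       \<and> E' \<inter> Cart = componentwise A D E \<inter> Cart
       \<and> M' \<inter> Cart = componentwise A D M \<inter> Cart"
proof -
  have S: "setting D E M A t"
    using assms(1-5) unfolding setting_def setting_axioms_def dsofs_def dsofs_axioms_def dofs_def
      dofs_axioms_def dcat_def stable_ofs_def by blast
  have e: "E' \<inter> Cart = componentwise A D E \<inter> Cart" unfolding E'_def Cart_def by (rule setting.E_eq[OF S])
  have m: "M' \<inter> Cart = componentwise A D M \<inter> Cart" unfolding M'_def Cart_def by (rule setting.M_eq[OF S])
  have o: "ofs (CartNt A D) (componentwise A D E \<inter> Cart) (componentwise A D M \<inter> Cart)"
    unfolding Cart_def by (rule setting.ofs_cart[OF S])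
  show ?thesis using e m o by simp
qed


end
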